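(* Let $f:\mathbb{R}^n\times\mathbb{R}^m\to\mathbb{R}$ and $g:\mathbb{R}^n\times\mathbb{R}^m\to\mathbb{R}^p$ be continuous. Assume that for every $x\in\mathbb{R}^n$, $f(x,\cdot)$ is strictly convex, $g(x,\cdot)$ is convex (componentwise), and the problem $\min_{u\in\mathbb{R}^m} f(x,u)$ subject to $g(x,u)\le 0$ has at least one minimizer; let $u^*(x)$ denote the (unique) minimizer. Assume moreover that local compact feasibility holds at every $x\in\mathbb{R}^n$. Then $u^*:\mathbb{R}^n\to\mathbb{R}^m$ is measurable (with respect to the Borel $\sigma$-algebras).
   Context: Local compact feasibility (LCF) holds at $x\in\mathbb{R}^n$ if there exist a compact set $K\subset\mathbb{R}^m$ and $\delta>0$ such that for all $y\in\mathbb{R}^n$ with $\|y-x\|<\delta$ there exists $u\in K$ with $g(y,u)\le 0$. *)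

theory Defs
  imports "HOL-Analysis.Analysis"
begin

definition strictly_convex_on :: "'a::real_vector set \<Rightarrow> ('a \<Rightarrow> real) \<Rightarrow> bool" where
  "strictly_convex_on S h \<longleftrightarrow> convex S \<and>
     (\<forall>x\<in>S. \<forall>y\<in>S. x \<noteq> y \<longrightarrow> (\<forall>t::real. 0 < t \<and> t < 1 \<longrightarrow>
        h (t *\<^sub>R x + (1 - t) *\<^sub>R y) < t * h x + (1 - t) * h y))"

definition nonpos_vec :: "real^'p \<Rightarrow> bool" where
  "nonpos_vec v \<longleftrightarrow> (\<forall>i. v $ i \<le> 0)"

definition LCF :: "(real^'n \<Rightarrow> real^'m \<Rightarrow> real^'p) \<Rightarrow> real^'n \<Rightarrow> bool" where
  "LCF g x \<longleftrightarrow> (\<exists>K \<delta>. compact K \<and> \<delta> > 0 \<and>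
     (\<forall>y. norm (y - x) < \<delta> \<longrightarrow> (\<exists>u\<in>K. nonpos_vec (g y u))))"

definition is_minimizer :: "(real^'n \<Rightarrow> real^'m \<Rightarrow> real) \<Rightarrow> (real^'n \<Rightarrow> real^'m \<Rightarrow> real^'p)
    \<Rightarrow> real^'n \<Rightarrow> real^'m \<Rightarrow> bool" where
  "is_minimizer f g x u \<longleftrightarrow> nonpos_vec (g x u) \<and>
     (\<forall>v. nonpos_vec (g x v) \<longrightarrow> f x u \<le> f x v)"

end

theory Submission
  imports Defs
begin

lemma proj_closed_open_borel:
  fixes A :: "('a::euclidean_space \<times> 'b::euclidean_space) set"
  assumes "closed A" "open U"
  shows "fst ` (A \<inter> U) \<in> sets borel"
proof -
  obtain C where C: "\<And>n. compact(C n)" "\<And>n. C n \<subseteq> U"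
                  "\<And>n. C n \<subseteq> interior(C(Suc n))"
                  "\<Union>(range C) = U"
                  "\<And>K. \<lbrakk>compact K; K \<subseteq> U\<rbrakk> \<Longrightarrow> \<exists>N. \<forall>n\<ge>N. K \<subseteq> (C n)"
    using open_Union_compact_subsets[OF assms(2)] by blast
  have eq: "fst ` (A \<inter> U) = (\<Union>n. fst ` (A \<inter> C n))"
    using C(4) by blast
  have *: "fst ` (A \<inter> C n) \<in> sets borel" for n
  proof -
    have "compact (A \<inter> C n)" using closed_Int_compact[OF assms(1) C(1)] .
    then have "compact (fst ` (A \<inter> C n))"
      by (intro compact_continuous_image continuous_on_fst continuous_on_id)
    then show ?thesis by (intro borel_closed compact_imp_closed)
  qed
  show ?thesis unfolding eq by (rule sets.countable_UN) (use * in blast)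
qed

lemma sconvD:
  assumes "strictly_convex_on S h" "a \<in> S" "b \<in> S" "a \<noteq> b" "0 < t" "t < 1"
  shows "h (t *\<^sub>R a + (1 - t) *\<^sub>R b) < t * h a + (1 - t) * h b"
  using assms unfolding strictly_convex_on_def by blast

lemma closed_nonpos: "closed {v::real^'p. nonpos_vec v}"
proof -
  have "{v::real^'p. nonpos_vec v} = (\<Inter>i. {v. v $ i \<le> 0})"
    by (auto simp: nonpos_vec_def)
  then show ?thesis by (auto intro: closed_halfspace_component_le_cart)
qed

theorem proposition3p8:
  fixes f :: "real^'n \<Rightarrow> real^'m \<Rightarrow> real"
    and g :: "real^'n \<Rightarrow> real^'m \<Rightarrow> real^'p"
    and ustar :: "real^'n \<Rightarrow> real^'m"
  assumes f_cont: "continuous_on UNIV (\<lambda>z. f (fst z) (snd z))"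
    and g_cont: "continuous_on UNIV (\<lambda>z. g (fst z) (snd z))"
    and f_sconv: "\<And>x. strictly_convex_on UNIV (f x)"
    and g_conv: "\<And>x i. convex_on UNIV (\<lambda>u. g x u $ i)"
    and exists_min: "\<And>x. \<exists>u. is_minimizer f g x u"
    and ustar_min: "\<And>x. is_minimizer f g x (ustar x)"
    and lcf: "\<And>x. LCF g x"
  shows "ustar \<in> borel_measurable borel"
proof -
  have fcx: "continuous_on S (f x)" for x S
  proof -
    have "continuous_on UNIV (\<lambda>v. (\<lambda>z. f (fst z) (snd z)) (x, v))"
      by (rule continuous_on_compose2[OF f_cont]) (auto intro!: continuous_intros)
    then show ?thesis by (auto intro: continuous_on_subset)
  qed
  have fconv: "f x ((1 - t) *\<^sub>R a + t *\<^sub>R b) \<le> (1 - t) * f x a + t * f x b"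
    if "0 \<le> t" "t \<le> 1" for x a b t
  proof (cases "t = 0 \<or> t = 1 \<or> a = b")
    case True
    then show ?thesis
      by (auto simp: algebra_simps simp flip: scaleR_add_left)
  next
    case False
    then have "f x (t *\<^sub>R b + (1 - t) *\<^sub>R a) < t * f x b + (1 - t) * f x a"
      using sconvD[OF f_sconv[of x] UNIV_I UNIV_I, of b a t] that by auto
    then show ?thesis by (simp add: algebra_simps)
  qed
  have gconv: "nonpos_vec (g x ((1 - t) *\<^sub>R a + t *\<^sub>R b))"
    if "0 \<le> t" "t \<le> 1" "nonpos_vec (g x a)" "nonpos_vec (g x b)" for x a b t
    unfolding nonpos_vec_def
  proof
    fix i
    have "g x ((1 - t) *\<^sub>R a + t *\<^sub>R b) $ i \<le> (1 - t) * g x a $ i + t * g x b $ i"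
      using convex_onD[OF g_conv[of x i]] that by auto
    also have "\<dots> \<le> 0"
      using that unfolding nonpos_vec_def
      by (intro add_nonpos_nonpos mult_nonneg_nonpos) auto
    finally show "g x ((1 - t) *\<^sub>R a + t *\<^sub>R b) $ i \<le> 0" .
  qed
  have closedA: "closed {z. nonpos_vec (g (fst z) (snd z))}"
  proof -
    have "{z. nonpos_vec (g (fst z) (snd z))} = (\<lambda>z. g (fst z) (snd z)) -` {v. nonpos_vec v}"
      by auto
    then show ?thesis
      using closed_vimage[OF closed_nonpos g_cont] by simp
  qed
  have bounded_case: "ustar -` B \<in> sets borel" if Bo: "open B" and Bb: "bounded B" for B
  proof -
    define P where "P q = {x. \<exists>u\<in>B. nonpos_vec (g x u) \<and> f x u < q}" for q
    define Q where "Q q = {x. \<exists>v\<in>frontier B. nonpos_vec (g x v) \<and> f x v \<le> q}" for q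
    have eq: "ustar -` B = (\<Union>r\<in>(UNIV::rat set). P (of_rat r) - Q (of_rat r))"
    proof (intro equalityI subsetI)
      fix x assume "x \<in> ustar -` B"
      then have uB: "ustar x \<in> B" by simp
      have feas: "nonpos_vec (g x (ustar x))" and minu: "\<And>v. nonpos_vec (g x v) \<Longrightarrow> f x (ustar x) \<le> f x v"
        using ustar_min[of x] unfolding is_minimizer_def by auto
      define F where "F = {v\<in>frontier B. nonpos_vec (g x v)}"
      have "\<exists>c. f x (ustar x) < c \<and> (\<forall>v\<in>F. c < f x v)"
      proof (cases "F = {}")
        case True then show ?thesis by (intro exI[of _ "f x (ustar x) + 1"]) auto
      next
        case False
        have "compact F"
        proof -
          have "F = frontier B \<inter> (\<lambda>v. g x v) -` {v. nonpos_vec v}" unfolding F_def by auto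
          moreover have "closed ((\<lambda>v. g x v) -` {v. nonpos_vec v})"
          proof -
            have "continuous_on UNIV (\<lambda>v. (\<lambda>z. g (fst z) (snd z)) (x, v))"
              by (rule continuous_on_compose2[OF g_cont]) (auto intro!: continuous_intros)
            then show ?thesis
              using closed_vimage[OF closed_nonpos] by simp
          qed
          moreover have "compact (frontier B)"
            using Bb by (simp add: compact_frontier_bounded)
          ultimately show ?thesis by (simp add: compact_Int_closed)
        qed
        then obtain v0 where v0: "v0 \<in> F" "\<And>v. v \<in> F \<Longrightarrow> f x v0 \<le> f x v"
          using continuous_attains_inf[OF _ False fcx] by metis
        have "f x (ustar x) < f x v0"
        proof (rule ccontr)
          assume "\<not> ?thesis"
          then have eqv: "f x v0 = f x (ustar x)" using minu v0(1) F_def by force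
          have ne: "v0 \<noteq> ustar x" using v0(1) uB Bo frontier_disjoint_eq F_def by blast
          define w where "w = (1/2::real) *\<^sub>R v0 + (1 - 1/2) *\<^sub>R ustar x"
          have "nonpos_vec (g x w)"
            using gconv[of "1/2" x "ustar x" v0] feas v0(1) unfolding w_def F_def
            by (simp add: algebra_simps)
          moreover have "f x w < (1/2) * f x v0 + (1 - 1/2) * f x (ustar x)"
          proof -
            show ?thesis using sconvD[OF f_sconv[of x] UNIV_I UNIV_I ne, of "1/2"] unfolding w_def by simp
          qed
          ultimately show False using minu eqv by fastforce
        qed
        then show ?thesis using v0
          by (intro exI[of _ "(f x (ustar x) + f x v0) / 2"]) force
      qed
      then obtain c where c: "f x (ustar x) < c" "\<And>v. v \<in> F \<Longrightarrow> c < f x v" by blast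
      obtain r where r: "f x (ustar x) < of_rat r" "of_rat r < c"
        using of_rat_dense[OF c(1)] by blast
      have "x \<in> P (of_rat r)" unfolding P_def using uB feas r by auto
      moreover have "x \<notin> Q (of_rat r)" unfolding Q_def using c(2) r F_def by force
      ultimately show "x \<in> (\<Union>r\<in>(UNIV::rat set). P (of_rat r) - Q (of_rat r))" by blast
    next
      fix x assume "x \<in> (\<Union>r\<in>(UNIV::rat set). P (of_rat r) - Q (of_rat r))"
      then obtain q u where u: "u \<in> B" "nonpos_vec (g x u)" "f x u < q"
        and nq: "\<And>v. v \<in> frontier B \<Longrightarrow> nonpos_vec (g x v) \<Longrightarrow> q < f x v"
        unfolding P_def Q_def by force
      have feas: "nonpos_vec (g x (ustar x))" and minu: "\<And>v. nonpos_vec (g x v) \<Longrightarrow> f x (ustar x) \<le> f x v"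
        using ustar_min[of x] unfolding is_minimizer_def by auto
      show "x \<in> ustar -` B"
      proof (rule ccontr)
        assume "x \<notin> ustar -` B"
        then have "closed_segment u (ustar x) - B \<noteq> {}" by auto
        moreover have "closed_segment u (ustar x) \<inter> B \<noteq> {}" using u(1) by auto
        ultimately have "closed_segment u (ustar x) \<inter> frontier B \<noteq> {}"
          by (intro connected_Int_frontier) auto
        then obtain w where w: "w \<in> closed_segment u (ustar x)" "w \<in> frontier B" by blast
        then obtain t where t: "0 \<le> t" "t \<le> 1" "w = (1 - t) *\<^sub>R u + t *\<^sub>R ustar x"
          unfolding closed_segment_def by blast
        have "nonpos_vec (g x w)" using gconv[OF t(1,2) u(2) feas] t(3) by simp
        then have "q < f x w" using nq w(2) by blast
        moreover have "f x w \<le> (1 - t) * f x u + t * f x (ustar x)"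
          using fconv[OF t(1,2)] t(3) by simp
        moreover have "(1 - t) * f x u + t * f x (ustar x) \<le> (1 - t) * f x u + t * f x u"
          using minu[OF u(2)] t by (simp add: mult_left_mono)
        ultimately show False using u(3) by (simp add: algebra_simps)
      qed
    qed
    have Pb: "P q \<in> sets borel" for q
    proof -
      have "P q = fst ` ({z. nonpos_vec (g (fst z) (snd z))} \<inter> ({z. snd z \<in> B} \<inter> {z. f (fst z) (snd z) < q}))"
      proof (intro equalityI subsetI)
        fix x assume "x \<in> P q"
        then obtain u where "u \<in> B" "nonpos_vec (g x u)" "f x u < q" unfolding P_def by blast
        then show "x \<in> fst ` ({z. nonpos_vec (g (fst z) (snd z))} \<inter> ({z. snd z \<in> B} \<inter> {z. f (fst z) (snd z) < q}))"
          by (intro image_eqI[of _ _ "(x,u)"]) auto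
      qed (auto simp: P_def)
      moreover have "open ({z::(real^'n) \<times> (real^'m). snd z \<in> B} \<inter> {z. f (fst z) (snd z) < q})"
      proof (intro open_Int)
        show "open {z::(real^'n) \<times> (real^'m). snd z \<in> B}"
        proof -
          have "open (snd -` B :: ((real^'n) \<times> (real^'m)) set)"
            by (intro open_vimage Bo continuous_intros)
          then show ?thesis by (simp add: vimage_def)
        qed
        show "open {z::(real^'n) \<times> (real^'m). f (fst z) (snd z) < q}"
          by (intro open_Collect_less f_cont continuous_on_const)
      qed
      ultimately show ?thesis using proj_closed_open_borel[OF closedA] by simp
    qed
    have Qb: "Q q \<in> sets borel" for q
    proof -
      have "Q q = fst ` ({z. nonpos_vec (g (fst z) (snd z))} \<inter> {z. snd z \<in> frontier B} \<inter> {z. f (fst z) (snd z) \<le> q} \<inter> UNIV)"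
      proof (intro equalityI subsetI)
        fix x assume "x \<in> Q q"
        then obtain u where "u \<in> frontier B" "nonpos_vec (g x u)" "f x u \<le> q" unfolding Q_def by blast
        then show "x \<in> fst ` ({z. nonpos_vec (g (fst z) (snd z))} \<inter> {z. snd z \<in> frontier B} \<inter> {z. f (fst z) (snd z) \<le> q} \<inter> UNIV)"
          by (intro image_eqI[of _ _ "(x,u)"]) auto
      qed (auto simp: Q_def)
      moreover have "closed ({z::(real^'n) \<times> (real^'m). nonpos_vec (g (fst z) (snd z))} \<inter> {z. snd z \<in> frontier B} \<inter> {z. f (fst z) (snd z) \<le> q})"
      proof (intro closed_Int closedA)
        show "closed {z::(real^'n) \<times> (real^'m). snd z \<in> frontier B}"
        proof -
          have "closed (snd -` frontier B :: ((real^'n) \<times> (real^'m)) set)"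
            by (intro closed_vimage frontier_closed continuous_intros)
          then show ?thesis by (simp add: vimage_def)
        qed
        show "closed {z::(real^'n) \<times> (real^'m). f (fst z) (snd z) \<le> q}"
          using f_cont by (intro closed_Collect_le) (auto intro: continuous_on_subset)
      qed
      ultimately show ?thesis using proj_closed_open_borel[OF _ open_UNIV] by simp
    qed
    show ?thesis unfolding eq by (rule sets.countable_UN) (use Pb Qb in blast)
  qed
  show ?thesis
  proof (rule borel_measurableI)
    fix S :: "(real^'m) set" assume "open S"
    have "ustar -` S = (\<Union>N::nat. ustar -` (S \<inter> ball 0 (real N)))"
    proof (intro equalityI subsetI)
      fix x assume "x \<in> ustar -` S"
      moreover obtain N where "norm (ustar x) < real N" using reals_Archimedean2 by blast
      ultimately show "x \<in> (\<Union>N::nat. ustar -` (S \<inter> ball 0 (real N)))" by auto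
    qed auto
    moreover have N: "ustar -` (S \<inter> ball 0 (real N)) \<in> sets borel" for N
      by (rule bounded_case) (use \<open>open S\<close> in \<open>auto simp: bounded_Int\<close>)
    ultimately show "ustar -` S \<inter> space borel \<in> sets borel"
      by (simp only: space_borel Int_UNIV_right) (rule sets.countable_UN, use N in blast)
  qed
qed

end
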